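(* For every $M\in\mathbb R^P$, the operator $A_M$ is well defined on $\mathcal H_{\rm sp}$ and for every $X\in\mathcal H_{\rm sp}$, $$A_MX=-\frac12\sum_{\lambda,\mu=1}^P\sum_{j,m=1}^3M^{[\lambda]}M^{[\mu]}A_{jm}(x^{[\mu]}-x^{[\lambda]})\,\sigma_m^{[\mu]}\sigma_j^{[\lambda]}X,$$ where $A_{jm}(x)=(2\pi)^{-3}\int_{\mathbb R^3}|\phi(|k|)|^2e^{-ik\cdot x}\frac{\delta_{jm}|k|^2-k_jk_m}{|k|^2}dk$.
   Context: Fix an integer $P\ge1$ and points $x^{[1]},\dots,x^{[P]}\in\mathbb R^3$. Let $\phi\in\mathcal S(\mathbb R)$ and for $k\in\mathbb R^3$ write $\phi(|k|)$. Let $\mathfrak H=\{V\in L^2(\mathbb R^3,\mathbb C^3):\ k\cdot V(k)=0\text{ a.e.}\}$, $\mathcal H_{\rm ph}$ the symmetric Fock space over $\mathfrak H$ with vacuum $\Psi_0$, Segal fields $\Phi_S(V)=\frac1{\sqrt2}(a^*(V)+a(V))$, $H_{\rm ph}=d\Gamma(M_\omega)$ with $M_\omega$ multiplication by $|k|$. Let $\mathcal H_{\rm sp}=(\mathbb C^2)^{\otimes P}$, $\mathcal H_{\rm tot}=\mathcal H_{\rm ph}\otimes\mathcal H_{\rm sp}$, $\sigma_1,\sigma_2,\sigma_3$ the Pauli matrices, $\sigma_m^{[\lambda]}$ acting as $\sigma_m$ on the $\lambda$-th factor and identity elsewhere. $B_{m,x}(k)=\frac{i\phi(|k|)|k|^{1/2}}{(2\pi)^{3/2}}e^{-ik\cdot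 x}\frac{k\times e_m}{|k|}$ ($e_m$ canonical basis). For $M\in\mathbb R^P$, $H_{\rm int}(M)=\sum_{\lambda=1}^P\sum_{m=1}^3M^{[\lambda]}\Phi_S(B_{m,x^{[\lambda]}})\otimes\sigma_m^{[\lambda]}$. Let $E:\mathcal H_{\rm sp}\to\mathcal H_{\rm tot}$, $EX=\Psi_0\otimes X$, with adjoint $E^*$, and $A_MX=-E^*H_{\rm int}(M)(H_{\rm ph}^{-1}\otimes I)H_{\rm int}(M)EX$, where $H_{\rm ph}^{-1}$ is applied to $H_{\rm int}(M)EX$, which lies in the one-photon sector, on which it acts as multiplication by $1/|k|$. *)

theory Defs
  imports "HOL-Analysis.Analysis"
begin

fun iter_deriv :: "nat \<Rightarrow> (real \<Rightarrow> complex) \<Rightarrow> real \<Rightarrow> complex" where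
  "iter_deriv 0 f = f"
| "iter_deriv (Suc n) f = (\<lambda>t. vector_derivative (iter_deriv n f) (at t))"

definition schwartz :: "(real \<Rightarrow> complex) \<Rightarrow> bool" where
  "schwartz f \<longleftrightarrow>
     (\<forall>n t. iter_deriv n f differentiable (at t)) \<and>
     (\<forall>n m. \<exists>C. \<forall>t. \<bar>t\<bar> ^ m * norm (iter_deriv n f t) \<le> C)"

definition l2inner :: "(real^3 \<Rightarrow> complex^3) \<Rightarrow> (real^3 \<Rightarrow> complex^3) \<Rightarrow> complex" where
  "l2inner V W = (\<integral>k. (\<Sum>i\<in>UNIV. cnj (V k $ i) * W k $ i) \<partial>lborel)"

definition in_frak_h :: "(real^3 \<Rightarrow> complex^3) \<Rightarrow> bool" where
  "in_frak_h V \<longleftrightarrow> V \<in> borel_measurable lborel \<and>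
     integrable lborel (\<lambda>k. (norm (V k))\<^sup>2) \<and>
     (AE k in lborel. (\<Sum>i\<in>UNIV. complex_of_real (k $ i) * V k $ i) = 0)"

definition Bfun :: "(real \<Rightarrow> complex) \<Rightarrow> 3 \<Rightarrow> real^3 \<Rightarrow> real^3 \<Rightarrow> complex^3" where
  "Bfun \<phi> m x k = (\<chi> i. \<i> * \<phi> (norm k) * complex_of_real (sqrt (norm k) / (2 * pi) powr (3/2))
        * exp (- \<i> * complex_of_real (k \<bullet> x))
        * complex_of_real ((cross3 k (axis m 1)) $ i / norm k))"

section \<open>Spin space (C^2)^{tensor P}, realised as functions on spin configurations\<close>

type_synonym 'p spin = "('p \<Rightarrow> bool) \<Rightarrow> complex"

text \<open>Pauli matrix sigma_m acting on the lambda-th factor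
  (False = first basis vector, True = second basis vector).\<close>
definition pauli :: "3 \<Rightarrow> 'p \<Rightarrow> 'p spin \<Rightarrow> 'p spin" where
  "pauli m l X = (\<lambda>s.
     if m = 1 then X (s(l := \<not> s l))
     else if m = 2 then (if s l then \<i> else - \<i>) * X (s(l := \<not> s l))
     else (if s l then -1 else 1) * X s)"

section \<open>Total space, truncated to the photon sectors with at most one photon\<close>

text \<open>A state is (vacuum component in H_sp, one-photon component in frak h tensor H_sp).
  The two-photon component produced by the second application of H_int is dropped;
  it is annihilated by E* anyway.\<close>
type_synonym 'p tot = "'p spin \<times> (('p \<Rightarrow> bool) \<Rightarrow> real^3 \<Rightarrow> complex^3)"

definition Emb :: "'p spin \<Rightarrow> 'p tot" where
  "Emb X = (X, \<lambda>s k. 0)"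

definition Emb_adj :: "'p tot \<Rightarrow> 'p spin" where
  "Emb_adj \<Psi> = fst \<Psi>"

text \<open>Segal field Phi_S(V) (restricted to sectors 0 and 1, result projected to sectors 0 and 1),
  tensored with a spin operator S.\<close>
definition segal_tensor :: "(real^3 \<Rightarrow> complex^3) \<Rightarrow> ('p spin \<Rightarrow> 'p spin) \<Rightarrow> 'p tot \<Rightarrow> 'p tot" where
  "segal_tensor V S \<Psi> =
     ((\<lambda>s. (1 / complex_of_real (sqrt 2)) *
              l2inner V (\<lambda>k. \<chi> i. S (\<lambda>s'. snd \<Psi> s' k $ i) s)),
      (\<lambda>s k. \<chi> i. (1 / complex_of_real (sqrt 2)) * S (fst \<Psi>) s * V k $ i))"

definition Hint :: "(real \<Rightarrow> complex) \<Rightarrow> ('p::finite \<Rightarrow> real^3) \<Rightarrow> ('p \<Rightarrow> real) \<Rightarrow> 'p tot \<Rightarrow> 'p tot" where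
  "Hint \<phi> x M \<Psi> =
     ((\<lambda>s. \<Sum>l\<in>UNIV. \<Sum>m\<in>UNIV. complex_of_real (M l) *
            fst (segal_tensor (Bfun \<phi> m (x l)) (pauli m l) \<Psi>) s),
      (\<lambda>s k. \<chi> i. \<Sum>l\<in>UNIV. \<Sum>m\<in>UNIV. complex_of_real (M l) *
            snd (segal_tensor (Bfun \<phi> m (x l)) (pauli m l) \<Psi>) s k $ i))"

text \<open>H_ph^{-1} on the one-photon sector: multiplication by 1/|k|
  (only applied to states with vanishing vacuum component).\<close>
definition Hph_inv :: "'p tot \<Rightarrow> 'p tot" where
  "Hph_inv \<Psi> = ((\<lambda>s. 0), (\<lambda>s k. \<chi> i. (1 / complex_of_real (norm k)) * snd \<Psi> s k $ i))"

definition A_op :: "(real \<Rightarrow> complex) \<Rightarrow> ('p::finite \<Rightarrow> real^3) \<Rightarrow> ('p \<Rightarrow> real) \<Rightarrow> 'p spin \<Rightarrow> 'p spin" where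
  "A_op \<phi> x M X = (\<lambda>s. - Emb_adj (Hint \<phi> x M (Hph_inv (Hint \<phi> x M (Emb X)))) s)"

definition Ajm_integrand :: "(real \<Rightarrow> complex) \<Rightarrow> 3 \<Rightarrow> 3 \<Rightarrow> real^3 \<Rightarrow> real^3 \<Rightarrow> complex" where
  "Ajm_integrand \<phi> j m y k =
     complex_of_real ((cmod (\<phi> (norm k)))\<^sup>2) * exp (- \<i> * complex_of_real (k \<bullet> y)) *
     complex_of_real (((if j = m then (norm k)\<^sup>2 else 0) - k $ j * k $ m) / (norm k)\<^sup>2)"

definition Ajm :: "(real \<Rightarrow> complex) \<Rightarrow> 3 \<Rightarrow> 3 \<Rightarrow> real^3 \<Rightarrow> complex" where
  "Ajm \<phi> j m y = complex_of_real (1 / (2 * pi) ^ 3) * (\<integral>k. Ajm_integrand \<phi> j m y k \<partial>lborel)"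

end

theory Submission
  imports Defs
begin


definition h1 :: "real \<Rightarrow> real" where
  "h1 t = indicator {0..1} t * t powr (-1/3) + indicator {1..} t * t powr (-2)"

lemma h1_nonneg: "0 \<le> h1 t" unfolding h1_def by (auto simp: indicator_def)

lemma h1_meas[measurable]: "h1 \<in> borel_measurable borel"
  unfolding h1_def by measurable

lemma h1_int: "integrable lborel h1"
proof -
  have a: "((\<lambda>x::real. x powr (-1/3::real)) has_integral (1 powr (-1/3+1) / (-1/3+1))) {0..1}"
    by (rule has_integral_powr_from_0) auto
  have b: "((\<lambda>x::real. x powr (-2)) has_integral (-(1 powr (-2+1)) / (-2+1))) {1..}"
    by (rule has_integral_powr_to_inf) auto
  have ia: "integrable lborel (\<lambda>t. indicator {0..1} t * t powr (-1/3::real))"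
  proof (rule integrableI_nonneg)
    show "(\<lambda>t. indicator {0..1} t * t powr (-1/3::real)) \<in> borel_measurable lborel" by measurable
    show "AE x in lborel. 0 \<le> indicator {0..1} x * x powr (-1/3::real)" by (auto simp: indicator_def)
    have "(\<integral>\<^sup>+ x. ennreal (indicator {0..1} x * x powr (-1/3::real)) \<partial>lborel)
        = (\<integral>\<^sup>+ x. ennreal (x powr (-1/3::real)) * indicator {0..1} x \<partial>lborel)"
      by (intro nn_integral_cong) (auto simp: indicator_def)
    also have "\<dots> = ennreal (1 powr (-1/3+1) / (-1/3+1))"
      by (rule nn_integral_has_integral_lebesgue'[OF _ a]) auto
    finally show "(\<integral>\<^sup>+ x. ennreal (indicator {0..1} x * x powr (-1/3::real)) \<partial>lborel) < \<infinity>" by simp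
  qed
  have ib: "integrable lborel (\<lambda>t. indicator {1..} t * t powr (-2::real))"
  proof (rule integrableI_nonneg)
    show "(\<lambda>t. indicator {1..} t * t powr (-2::real)) \<in> borel_measurable lborel" by measurable
    show "AE x in lborel. 0 \<le> indicator {1..} x * x powr (-2::real)" by (auto simp: indicator_def)
    have "(\<integral>\<^sup>+ x. ennreal (indicator {1..} x * x powr (-2::real)) \<partial>lborel)
        = (\<integral>\<^sup>+ x. ennreal (x powr (-2::real)) * indicator {1..} x \<partial>lborel)"
      by (intro nn_integral_cong) (auto simp: indicator_def)
    also have "\<dots> = ennreal (-(1 powr (-2+1)) / (-2+1))"
      by (rule nn_integral_has_integral_lebesgue'[OF _ b]) auto
    finally show "(\<integral>\<^sup>+ x. ennreal (indicator {1..} x * x powr (-2::real)) \<partial>lborel) < \<infinity>" by simp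
  qed
  show ?thesis unfolding h1_def using Bochner_Integration.integrable_add[OF ia ib] by simp
qed

definition g1 :: "real \<Rightarrow> real" where "g1 t = h1 t + h1 (- t)"

lemma g1_meas[measurable]: "g1 \<in> borel_measurable borel"
  unfolding g1_def by measurable

lemma g1_int: "integrable lborel g1"
proof -
  have "integrable (distr lborel borel uminus) h1" using h1_int by (simp add: lborel_distr_uminus)
  then have "integrable lborel (\<lambda>t. h1 (- t))"
    by (subst (asm) integrable_distr_eq) auto
  then show ?thesis unfolding g1_def using Bochner_Integration.integrable_add[OF h1_int] by simp
qed

lemma g1_small: "t \<noteq> 0 \<Longrightarrow> \<bar>t\<bar> \<le> 1 \<Longrightarrow> \<bar>t\<bar> powr (-1/3) \<le> g1 t"
  unfolding g1_def h1_def using h1_nonneg[of t] h1_nonneg[of "-t"]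
  by (cases "t \<ge> 0") (auto simp: indicator_def)

lemma g1_large: "\<bar>t\<bar> \<ge> 1 \<Longrightarrow> \<bar>t\<bar> powr (-2) \<le> g1 t"
  unfolding g1_def h1_def
  by (cases "t \<ge> 0") (auto simp: indicator_def)

lemma g1_nonneg: "0 \<le> g1 t" unfolding g1_def using h1_nonneg[of t] h1_nonneg[of "-t"] by simp


definition G3 :: "real^3 \<Rightarrow> real" where "G3 k = (\<Prod>i\<in>UNIV. g1 (k $ i))"

lemma Basis_real3: "(Basis :: (real^3) set) = range (\<lambda>i. axis i 1)"
  by (auto simp: Basis_vec_def)

lemma G3_Basis: "G3 k = (\<Prod>b\<in>Basis. g1 (k \<bullet> b))"
proof -
  have inj: "inj (\<lambda>i::3. axis i (1::real))" by (auto simp: inj_def axis_eq_axis)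
  show ?thesis unfolding G3_def Basis_real3
    by (subst prod.reindex[OF inj]) (simp add: cart_eq_inner_axis o_def)
qed

lemma G3_meas[measurable]: "G3 \<in> borel_measurable borel"
  unfolding G3_def by measurable

lemma G3_int: "integrable lborel G3"
proof -
  interpret product_sigma_finite "\<lambda>_. lborel" by standard
  define T where "T = (\<lambda>f. \<Sum>b\<in>(Basis::(real^3) set). f b *\<^sub>R b)"
  have Tm: "T \<in> (\<Pi>\<^sub>M b\<in>Basis. lborel) \<rightarrow>\<^sub>M borel" unfolding T_def by measurable
  have "integrable (\<Pi>\<^sub>M b\<in>(Basis::(real^3) set). lborel) (\<lambda>f. \<Prod>b\<in>Basis. g1 (f b))"
    by (rule product_integrable_prod) (auto intro: g1_int)
  moreover have "\<And>f. G3 (T f) = (\<Prod>b\<in>Basis. g1 (f b))"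
    unfolding G3_Basis T_def by (intro prod.cong refl) (simp add: inner_sum_left inner_Basis if_distrib cong: if_cong)
  ultimately have "integrable (\<Pi>\<^sub>M b\<in>(Basis::(real^3) set). lborel) (\<lambda>f. G3 (T f))" by simp
  then have "integrable (distr (\<Pi>\<^sub>M b\<in>(Basis::(real^3) set). lborel) borel T) G3"
    by (subst integrable_distr_eq[OF Tm]) auto
  then show ?thesis by (simp add: T_def lborel_eq[symmetric])
qed

lemma AE_nonzero_coords: "AE k in lborel. \<forall>i. (k::real^3) $ i \<noteq> 0"
proof -
  have "{k::real^3. k $ i = 0} \<in> null_sets lborel" for i
  proof -
    have "{k::real^3. k $ i = 0} \<in> null_sets lebesgue"
      using negligible_standard_hyperplane_cart[of i] negligible_iff_null_sets by blast
    moreover have "{k::real^3. k $ i = 0} \<in> sets borel" by measurable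
    ultimately show ?thesis by (metis null_sets_completion_iff sets_lborel) 
  qed
  then have "(\<Union>i. {k::real^3. k $ i = 0}) \<in> null_sets lborel" by auto
  then show ?thesis by (rule AE_not_in[THEN eventually_mono]) auto
qed




lemma G3_expand: "G3 k = g1 (k$1) * g1 (k$2) * g1 (k$3)"
  unfolding G3_def UNIV_3 by (simp add: ac_simps)

lemma G3_small:
  assumes nz: "\<forall>i. (k::real^3) $ i \<noteq> 0" and sm: "\<forall>i. \<bar>k $ i\<bar> \<le> 1"
  shows "1 / norm k \<le> G3 k" "norm k \<le> 3" "0 < norm k"
proof -
  have r0: "0 < norm k" using nz by (metis norm_eq_zero vec_eq_iff zero_index zero_less_norm_iff)
  then show "0 < norm k" .
  have b: "norm k powr (-1/3) \<le> g1 (k $ i)" for i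
  proof -
    have "norm k powr (-1/3) \<le> \<bar>k$i\<bar> powr (-1/3)"
      by (rule powr_mono2') (use nz component_le_norm_cart[of k i] in auto)
    also have "\<dots> \<le> g1 (k$i)" using g1_small nz sm by auto
    finally show ?thesis .
  qed
  have "1 / norm k = norm k powr (-1/3) * norm k powr (-1/3) * norm k powr (-1/3)"
    using r0 by (simp only: powr_add[symmetric]) (simp add: powr_minus_divide)
  also have "\<dots> \<le> G3 k" unfolding G3_expand
    by (rule mult_mono[OF mult_mono[OF b b] b]) (auto simp: g1_nonneg)
  finally show "1 / norm k \<le> G3 k" .
  have "norm k \<le> (\<Sum>i\<in>UNIV. \<bar>k$i\<bar>)" by (rule norm_le_l1_cart)
  also have "\<dots> \<le> 3" using sm unfolding sum_3
    by (smt (verit) forall_3)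
  finally show "norm k \<le> 3" .
qed

lemma G3_large:
  assumes lg: "\<bar>(k::real^3) $ j\<bar> > 1" and nz: "\<forall>i. k $ i \<noteq> 0"
  shows "1 / norm k ^ 6 \<le> G3 k" "1 < norm k"
proof -
  show r1: "1 < norm k" using lg component_le_norm_cart[of k j] by linarith
  have b: "norm k powr (-2) \<le> g1 (k $ i)" for i
  proof (cases "\<bar>k$i\<bar> \<le> 1")
    case True
    have ki: "k$i \<noteq> 0" using nz by auto
    have "1 \<le> norm k ^ 2" using r1 by (simp add: one_le_power)
    then have "1 / norm k ^ 2 \<le> 1" by (simp add: divide_le_eq_1)
    then have "norm k powr (-2) \<le> 1" using r1 by (simp add: powr_minus_divide powr_realpow)
    also have "1 \<le> \<bar>k$i\<bar> powr (-1/3)"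
      using True ki by (simp add: powr_minus_divide powr_le1)
    also have "\<bar>k$i\<bar> powr (-1/3) \<le> g1 (k$i)" using g1_small True ki by auto
    finally show ?thesis .
  next
    case False
    have "norm k powr (-2) \<le> \<bar>k$i\<bar> powr (-2)"
      by (rule powr_mono2') (use False component_le_norm_cart[of k i] in auto)
    also have "\<dots> \<le> g1 (k$i)" using g1_large False by auto
    finally show ?thesis .
  qed
  have e: "norm k powr (-2) = 1 / norm k ^ 2" using r1 by (simp add: powr_minus_divide powr_numeral)
  have "1 / norm k ^ 6 = norm k powr (-2) * norm k powr (-2) * norm k powr (-2)"
    unfolding e by (simp flip: power_add)
  also have "\<dots> \<le> G3 k" unfolding G3_expand
    by (rule mult_mono[OF mult_mono[OF b b] b]) (auto simp: g1_nonneg)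
  finally show "1 / norm k ^ 6 \<le> G3 k" .
qed


lemma schwartz_bounds:
  assumes "schwartz \<phi>"
  shows "\<exists>C0 C4. (\<forall>t. cmod (\<phi> t) \<le> C0) \<and> (\<forall>t. \<bar>t\<bar>^4 * cmod (\<phi> t) \<le> C4)"
proof -
  have H: "\<forall>n m. \<exists>C. \<forall>t. \<bar>t\<bar> ^ m * norm (iter_deriv n \<phi> t) \<le> C"
    using assms[unfolded schwartz_def] by (rule conjunct2)
  obtain C0 where c0: "\<forall>t. \<bar>t\<bar> ^ 0 * norm (iter_deriv 0 \<phi> t) \<le> C0"
    using spec[OF spec[OF H, of 0], of 0] by (elim exE)
  obtain C4 where c4: "\<forall>t. \<bar>t\<bar> ^ 4 * norm (iter_deriv 0 \<phi> t) \<le> C4"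
    using spec[OF spec[OF H, of 0], of 4] by (elim exE)
  have "\<forall>t. cmod (\<phi> t) \<le> C0" using c0 by simp
  moreover have "\<forall>t. \<bar>t\<bar>^4 * cmod (\<phi> t) \<le> C4" using c4 by simp
  ultimately show ?thesis by blast
qed

lemma schwartz_cont:
  assumes "schwartz \<phi>"
  shows "continuous_on UNIV \<phi>"
proof -
  have H: "\<forall>n t. iter_deriv n \<phi> differentiable (at t)"
    using assms[unfolded schwartz_def] by (rule conjunct1)
  have "\<phi> differentiable (at t)" for t using H[rule_format, of 0 t] by simp
  then have "isCont \<phi> t" for t by (rule differentiable_imp_continuous_within)
  then show ?thesis by (simp add: continuous_at_imp_continuous_on)
qed

lemma schwartz_meas[measurable]:
  assumes "schwartz \<phi>"
  shows "\<phi> \<in> borel_measurable borel"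
  using schwartz_cont[OF assms] by (rule borel_measurable_continuous_onI)

lemma Q_bound:
  fixes k :: "real^3"
  assumes C0: "\<forall>t. cmod (\<phi> t) \<le> C0" and C4: "\<forall>t. \<bar>t\<bar>^4 * cmod (\<phi> t) \<le> C4"
    and nz: "\<forall>i. k $ i \<noteq> 0"
  shows "(cmod (\<phi> (norm k)))\<^sup>2 * (norm k + 1 + 1 / norm k) \<le> (13 * C0\<^sup>2 + 3 * C4\<^sup>2) * G3 k"
proof -
  define r where "r = norm k"
  define a where "a = cmod (\<phi> r)"
  have a0: "0 \<le> a" unfolding a_def by simp
  have aC0: "a \<le> C0" using C0 unfolding a_def by auto
  have aC4: "r^4 * a \<le> C4" using C4[rule_format, of r] unfolding a_def r_def by simp
  have G0: "0 \<le> G3 k" unfolding G3_expand by (simp add: g1_nonneg)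
  show ?thesis
  proof (cases "\<forall>i. \<bar>k $ i\<bar> \<le> 1")
    case True
    note S = G3_small[OF nz True]
    have r0: "0 < r" and r3: "r \<le> 3" using S unfolding r_def by auto
    have "a\<^sup>2 \<le> C0\<^sup>2" using a0 aC0 by (simp add: power_mono)
    have "a\<^sup>2 * (r + 1 + 1 / r) \<le> C0\<^sup>2 * (13 / r)"
    proof (rule mult_mono)
      show "a\<^sup>2 \<le> C0\<^sup>2" using a0 aC0 by (simp add: power_mono)
      have "r * r \<le> 3 * 3" using r0 r3 by (intro mult_mono) auto
      then have "r \<le> 9 / r" using r0 by (simp add: field_simps)
      moreover have "1 \<le> 3 / r" using r0 r3 by (simp add: field_simps)
      ultimately show "r + 1 + 1 / r \<le> 13 / r" by (simp add: field_simps)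
    qed (use r0 in auto)
    also have "\<dots> = 13 * C0\<^sup>2 * (1 / r)" by simp
    also have "\<dots> \<le> 13 * C0\<^sup>2 * G3 k" using S(1) unfolding r_def by (intro mult_left_mono) auto
    also have "\<dots> \<le> (13 * C0\<^sup>2 + 3 * C4\<^sup>2) * G3 k" using G0 by (intro mult_right_mono) auto
    finally show ?thesis unfolding a_def r_def .
  next
    case False
    then obtain j where j: "\<bar>k $ j\<bar> > 1" by (auto simp: not_le)
    note L = G3_large[OF j nz]
    have r1: "1 < r" using L unfolding r_def by auto
    have "(r^4 * a)\<^sup>2 \<le> C4\<^sup>2" using aC4 a0 r1 by (intro power_mono) auto
    moreover have "(r^4 * a)\<^sup>2 = a\<^sup>2 * r^8" by (simp add: power_mult_distrib flip: power_mult)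
    ultimately have "a\<^sup>2 * r^8 \<le> C4\<^sup>2" by simp
    have "a\<^sup>2 * (r + 1 + 1 / r) \<le> a\<^sup>2 * (3 * r)"
    proof (intro mult_left_mono)
      have "1 < r * r" using r1 by (simp add: less_1_mult)
      moreover have "r < r * r" using r1 by simp
      moreover have "1 / r < 1" using r1 by simp
      ultimately show "r + 1 + 1 / r \<le> 3 * r" using r1 by linarith
    qed simp
    also have "\<dots> = 3 * (a\<^sup>2 * r^8) / r^7"
    proof -
      have "r^8 = r^7 * r" by (simp add: power_Suc2[symmetric])
      then show ?thesis using r1 by simp
    qed
    also have "\<dots> \<le> 3 * C4\<^sup>2 / r^7" using \<open>a\<^sup>2 * r^8 \<le> C4\<^sup>2\<close> r1 by (intro divide_right_mono) auto
    also have "\<dots> \<le> 3 * C4\<^sup>2 / r^6" using r1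
      by (intro divide_left_mono) (auto simp: power_increasing)
    also have "\<dots> = 3 * C4\<^sup>2 * (1 / r^6)" by simp
    also have "\<dots> \<le> 3 * C4\<^sup>2 * G3 k" using L(1) unfolding r_def by (intro mult_left_mono) auto
    also have "\<dots> \<le> (13 * C0\<^sup>2 + 3 * C4\<^sup>2) * G3 k" using G0 by (intro mult_right_mono) auto
    finally show ?thesis unfolding a_def r_def .
  qed
qed

lemma Q_int:
  assumes "schwartz \<phi>"
  shows "integrable lborel (\<lambda>k::real^3. (cmod (\<phi> (norm k)))\<^sup>2 * (norm k + 1 + 1 / norm k))"
proof -
  obtain C0 C4 where C: "\<forall>t. cmod (\<phi> t) \<le> C0" "\<forall>t. \<bar>t\<bar>^4 * cmod (\<phi> t) \<le> C4"
    using schwartz_bounds[OF assms] by blast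
  have m[measurable]: "\<phi> \<in> borel_measurable borel" using assms by (rule schwartz_meas)
  show ?thesis
  proof (rule Bochner_Integration.integrable_bound)
    show "integrable lborel (\<lambda>k. (13 * C0\<^sup>2 + 3 * C4\<^sup>2) * G3 k)"
      using G3_int by simp
    show "(\<lambda>k::real^3. (cmod (\<phi> (norm k)))\<^sup>2 * (norm k + 1 + 1 / norm k)) \<in> borel_measurable lborel"
      by measurable
    show "AE k in lborel. norm ((cmod (\<phi> (norm k)))\<^sup>2 * (norm k + 1 + 1 / norm k))
       \<le> norm ((13 * C0\<^sup>2 + 3 * C4\<^sup>2) * G3 k)"
      using AE_nonzero_coords
    proof (rule eventually_mono)
      fix k :: "real^3" assume nz: "\<forall>i. k $ i \<noteq> 0"
      have "0 \<le> (cmod (\<phi> (norm k)))\<^sup>2 * (norm k + 1 + 1 / norm k)" by simp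
      then show "norm ((cmod (\<phi> (norm k)))\<^sup>2 * (norm k + 1 + 1 / norm k))
         \<le> norm ((13 * C0\<^sup>2 + 3 * C4\<^sup>2) * G3 k)"
        using Q_bound[OF C nz] by simp
    qed
  qed
qed



lemma cross_axis_inner:
  fixes k :: "real^3"
  shows "(cross3 k (axis n 1)) \<bullet> (cross3 k (axis m 1)) = (if n = m then (norm k)\<^sup>2 else 0) - k$n * k$m"
proof -
  have nk: "(norm k)\<^sup>2 = k$1 * k$1 + k$2 * k$2 + k$3 * k$3"
    by (simp add: power2_norm_eq_inner inner_vec_def sum_3)
  show ?thesis unfolding nk
    using exhaust_3[of n] exhaust_3[of m]
    by (auto simp: cross3_def inner_vec_def sum_3 vector_def axis_def algebra_simps)
qed


definition beta :: "(real \<Rightarrow> complex) \<Rightarrow> real^3 \<Rightarrow> real^3 \<Rightarrow> complex" where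
  "beta \<phi> y k = \<i> * \<phi> (norm k) * complex_of_real (sqrt (norm k) / (2 * pi) powr (3/2))
        * exp (- \<i> * complex_of_real (k \<bullet> y))"

lemma Bfun_comp: "Bfun \<phi> m y k $ i = beta \<phi> y k * complex_of_real (cross3 k (axis m 1) $ i / norm k)"
  unfolding Bfun_def beta_def by simp

lemma beta_prod:
  "cnj (beta \<phi> y1 k) * beta \<phi> y2 k =
     complex_of_real ((cmod (\<phi> (norm k)))\<^sup>2 * norm k / (2 * pi)^3) * exp (- \<i> * complex_of_real (k \<bullet> (y2 - y1)))"
proof -
  define s where "s = sqrt (norm k) / (2 * pi) powr (3/2)"
  have ss: "s * s = norm k / (2 * pi)^3"
  proof -
    have "(2 * pi) powr (3/2) * (2 * pi) powr (3/2) = (2 * pi) powr 3"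
      by (simp only: powr_add[symmetric]) simp
    also have "\<dots> = (2 * pi)^3" by (simp add: powr_numeral)
    finally show ?thesis unfolding s_def by simp
  qed
  have e: "cnj (exp (- \<i> * complex_of_real (k \<bullet> y1))) * exp (- \<i> * complex_of_real (k \<bullet> y2))
      = exp (- \<i> * complex_of_real (k \<bullet> (y2 - y1)))"
    by (simp add: exp_cnj exp_add[symmetric] inner_diff_right algebra_simps)
  have p: "cnj (\<phi> (norm k)) * \<phi> (norm k) = complex_of_real ((cmod (\<phi> (norm k)))\<^sup>2)"
    by (metis complex_norm_square mult.commute of_real_power)
  have "cnj (beta \<phi> y1 k) * beta \<phi> y2 k =
     (cnj (\<phi> (norm k)) * \<phi> (norm k)) * complex_of_real (s * s) *
     (cnj (exp (- \<i> * complex_of_real (k \<bullet> y1))) * exp (- \<i> * complex_of_real (k \<bullet> y2)))"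
    unfolding beta_def s_def[symmetric] by (simp add: algebra_simps)
  also have "\<dots> = complex_of_real ((cmod (\<phi> (norm k)))\<^sup>2 * norm k / (2 * pi)^3) * exp (- \<i> * complex_of_real (k \<bullet> (y2 - y1)))"
    unfolding e p ss by simp
  finally show ?thesis .
qed

lemma key0:
  "(\<Sum>i\<in>UNIV. cnj (Bfun \<phi> n y1 k $ i) * Bfun \<phi> m y2 k $ i) =
     complex_of_real ((cmod (\<phi> (norm k)))\<^sup>2 * norm k / (2 * pi)^3) * exp (- \<i> * complex_of_real (k \<bullet> (y2 - y1)))
     * complex_of_real (((if n = m then (norm k)\<^sup>2 else 0) - k$n * k$m) / (norm k)\<^sup>2)"
proof -
  have "(\<Sum>i\<in>UNIV. cnj (Bfun \<phi> n y1 k $ i) * Bfun \<phi> m y2 k $ i)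
     = cnj (beta \<phi> y1 k) * beta \<phi> y2 k *
       complex_of_real (\<Sum>i\<in>UNIV. cross3 k (axis n 1) $ i * cross3 k (axis m 1) $ i / (norm k)\<^sup>2)"
    unfolding Bfun_comp by (simp add: sum_distrib_left power2_eq_square algebra_simps)
  also have "(\<Sum>i\<in>UNIV. cross3 k (axis n 1) $ i * cross3 k (axis m 1) $ i / (norm k)\<^sup>2)
      = (cross3 k (axis n 1) \<bullet> cross3 k (axis m 1)) / (norm k)\<^sup>2"
    by (simp add: inner_vec_def sum_divide_distrib)
  finally show ?thesis unfolding beta_prod cross_axis_inner by simp
qed


lemma key1:
  "(\<Sum>i\<in>UNIV. cnj (Bfun \<phi> n y1 k $ i) * Bfun \<phi> m y2 k $ i) / complex_of_real (norm k) =
     complex_of_real (1 / (2 * pi) ^ 3) * Ajm_integrand \<phi> n m (y2 - y1) k"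
proof (cases "k = 0")
  case True
  then show ?thesis by (simp add: Ajm_integrand_def)
next
  case False
  then have r: "norm k > 0" by simp
  show ?thesis unfolding key0 Ajm_integrand_def using r
    by (simp add: field_simps)
qed

lemma norm_vec_sq: "(norm (v :: complex^'n))\<^sup>2 = (\<Sum>i\<in>UNIV. (cmod (v $ i))\<^sup>2)"
  unfolding norm_vec_def L2_set_def by (simp add: sum_nonneg)

lemma norm_Bfun_sq:
  "(norm (Bfun \<phi> m y k))\<^sup>2 = (cmod (\<phi> (norm k)))\<^sup>2 * norm k / (2 * pi)^3 * (((norm k)\<^sup>2 - (k$m)\<^sup>2) / (norm k)\<^sup>2)"
proof -
  have "complex_of_real ((norm (Bfun \<phi> m y k))\<^sup>2) = (\<Sum>i\<in>UNIV. cnj (Bfun \<phi> m y k $ i) * Bfun \<phi> m y k $ i)"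
    unfolding norm_vec_sq of_real_sum
    by (intro sum.cong refl) (metis complex_norm_square mult.commute of_real_power)
  also have "\<dots> = complex_of_real ((cmod (\<phi> (norm k)))\<^sup>2 * norm k / (2 * pi)^3 * (((norm k)\<^sup>2 - (k$m)\<^sup>2) / (norm k)\<^sup>2))"
    unfolding key0 by (simp add: power2_eq_square)
  finally show ?thesis by (simp only: of_real_eq_iff)
qed

lemma Bfun_sq_le:
  "(norm (Bfun \<phi> m y k))\<^sup>2 \<le> (cmod (\<phi> (norm k)))\<^sup>2 * norm k / (2 * pi)^3"
proof -
  have "(k$m)\<^sup>2 \<le> (norm k)\<^sup>2"
    using power_mono[OF component_le_norm_cart[of k m] abs_ge_zero, of 2] by simp
  then have "((norm k)\<^sup>2 - (k$m)\<^sup>2) / (norm k)\<^sup>2 \<le> 1" "0 \<le> ((norm k)\<^sup>2 - (k$m)\<^sup>2) / (norm k)\<^sup>2"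
    by (auto simp: divide_le_eq_1)
  then show ?thesis unfolding norm_Bfun_sq
    by (intro mult_left_le) auto
qed

lemma cross_norm_le: "norm (cross3 k (axis m 1)) \<le> norm (k::real^3)"
proof -
  have "(norm (cross3 k (axis m 1)))\<^sup>2 = cross3 k (axis m 1) \<bullet> cross3 k (axis m 1)"
    by (simp add: power2_norm_eq_inner)
  also have "\<dots> = (norm k)\<^sup>2 - (k$m)\<^sup>2"
    using cross_axis_inner[of k m m] by (simp add: power2_eq_square)
  also have "\<dots> \<le> (norm k)\<^sup>2" by simp
  finally show ?thesis by (simp add: power2_le_iff_abs_le[symmetric] abs_le_square_iff)
qed

lemma Ajm_integrand_le: "cmod (Ajm_integrand \<phi> j m y k) \<le> (cmod (\<phi> (norm k)))\<^sup>2"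
proof -
  have "\<bar>(if j = m then (norm k)\<^sup>2 else 0) - k$j * k$m\<bar> \<le> (norm k)\<^sup>2"
  proof -
    have "\<bar>(if j = m then (norm k)\<^sup>2 else 0) - k$j * k$m\<bar> = \<bar>cross3 k (axis j 1) \<bullet> cross3 k (axis m 1)\<bar>"
      by (simp add: cross_axis_inner)
    also have "\<dots> \<le> norm (cross3 k (axis j 1)) * norm (cross3 k (axis m 1))"
      by (rule Cauchy_Schwarz_ineq2)
    also have "\<dots> \<le> norm k * norm k"
      by (intro mult_mono cross_norm_le) auto
    finally show ?thesis by (simp add: power2_eq_square)
  qed
  define q where "q = ((if j = m then (norm k)\<^sup>2 else 0) - k$j * k$m) / (norm k)\<^sup>2"
  have q1: "\<bar>q\<bar> \<le> 1" unfolding q_def using \<open>\<bar>_\<bar> \<le> (norm k)\<^sup>2\<close>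
    by (cases "k = 0") (auto simp: divide_le_eq_1)
  have e: "cmod (exp (- \<i> * complex_of_real (k \<bullet> y))) = 1"
    by (metis mult_minus_left mult_minus_right norm_exp_i_times of_real_minus)
  have "Ajm_integrand \<phi> j m y k = complex_of_real ((cmod (\<phi> (norm k)))\<^sup>2) * exp (- \<i> * complex_of_real (k \<bullet> y)) * complex_of_real q"
    unfolding Ajm_integrand_def q_def by simp
  then have "cmod (Ajm_integrand \<phi> j m y k) = (cmod (\<phi> (norm k)))\<^sup>2 * \<bar>q\<bar>"
    by (simp only: norm_mult norm_of_real e) simp
  also have "\<dots> \<le> (cmod (\<phi> (norm k)))\<^sup>2" using q1 by (intro mult_left_le) auto
  finally show ?thesis .
qed



lemma vec_meas:
  fixes f :: "'a \<Rightarrow> complex^'n"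
  assumes "\<And>i. (\<lambda>x. f x $ i) \<in> borel_measurable M"
  shows "f \<in> borel_measurable M"
proof (rule borel_measurable_euclidean_space[THEN iffD2], intro ballI)
  fix b :: "complex^'n" assume "b \<in> Basis"
  then obtain i u where b: "b = axis i u" "u \<in> Basis" by (auto simp: Basis_vec_def)
  have "(\<lambda>x. f x $ i \<bullet> u) \<in> borel_measurable M"
    using assms[of i] by measurable
  then show "(\<lambda>x. f x \<bullet> b) \<in> borel_measurable M" by (simp add: b inner_axis)
qed

lemma cross_comp_meas[measurable]: "(\<lambda>k. cross3 k (axis m 1) $ i) \<in> borel_measurable borel"
proof -
  have "(\<lambda>k::real^3. cross3 k (axis m 1)) \<in> borel_measurable borel"
    by (intro borel_measurable_continuous_onI continuous_on_cross continuous_intros)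
  then show ?thesis using borel_measurable_nth[of i] by (rule measurable_compose)
qed

lemma Bfun_meas:
  assumes "schwartz \<phi>"
  shows "Bfun \<phi> m y \<in> borel_measurable lborel"
proof (rule vec_meas)
  fix i
  have [measurable]: "\<phi> \<in> borel_measurable borel" using assms by (rule schwartz_meas)
  have "(\<lambda>k. \<i> * \<phi> (norm k) * complex_of_real (sqrt (norm k) / (2 * pi) powr (3/2))
        * exp (- \<i> * complex_of_real (k \<bullet> y))
        * complex_of_real ((cross3 k (axis m 1)) $ i / norm k)) \<in> borel_measurable lborel"
    by measurable
  then show "(\<lambda>k. Bfun \<phi> m y k $ i) \<in> borel_measurable lborel" by (simp add: Bfun_def)
qed

lemma Ajm_integrand_meas:
  assumes "schwartz \<phi>"
  shows "Ajm_integrand \<phi> j m y \<in> borel_measurable lborel"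
proof -
  have [measurable]: "\<phi> \<in> borel_measurable borel" using assms by (rule schwartz_meas)
  show ?thesis unfolding Ajm_integrand_def by measurable
qed

lemma Q_ge: "0 \<le> r \<Longrightarrow> 1 \<le> r + 1 + 1 / (r::real)" "0 \<le> r \<Longrightarrow> r \<le> r + 1 + 1 / (r::real)"
  "0 \<le> r \<Longrightarrow> 1 / r \<le> r + 1 + 1 / (r::real)"
  by auto

lemma pi_cube_ge: "1 \<le> (2 * pi) ^ 3"
  using pi_gt3 by (intro one_le_power) auto

lemma div_le_self': "0 \<le> (a::real) \<Longrightarrow> 1 \<le> d \<Longrightarrow> a / d \<le> a"
  by (simp add: divide_le_eq mult_le_cancel_left1)

lemma int_B_sq:
  assumes "schwartz \<phi>"
  shows "integrable lborel (\<lambda>k. (norm (Bfun \<phi> m y k))\<^sup>2)"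
proof (rule Bochner_Integration.integrable_bound[OF Q_int[OF assms]])
  show "(\<lambda>k. (norm (Bfun \<phi> m y k))\<^sup>2) \<in> borel_measurable lborel"
    using Bfun_meas[OF assms] by measurable
  show "AE k in lborel. norm ((norm (Bfun \<phi> m y k))\<^sup>2) \<le> norm ((cmod (\<phi> (norm k)))\<^sup>2 * (norm k + 1 + 1 / norm k))"
  proof (intro AE_I2)
    fix k :: "real^3"
    have "(norm (Bfun \<phi> m y k))\<^sup>2 \<le> (cmod (\<phi> (norm k)))\<^sup>2 * norm k / (2 * pi)^3" by (rule Bfun_sq_le)
    also have "\<dots> \<le> (cmod (\<phi> (norm k)))\<^sup>2 * norm k"
      using pi_cube_ge by (intro div_le_self') auto
    also have "\<dots> \<le> (cmod (\<phi> (norm k)))\<^sup>2 * (norm k + 1 + 1 / norm k)"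
      by (intro mult_left_mono Q_ge) auto
    finally show "norm ((norm (Bfun \<phi> m y k))\<^sup>2) \<le> norm ((cmod (\<phi> (norm k)))\<^sup>2 * (norm k + 1 + 1 / norm k))"
      by simp
  qed
qed

lemma int_B_div:
  assumes "schwartz \<phi>"
  shows "integrable lborel (\<lambda>k. (norm (Bfun \<phi> m y k) / norm k)\<^sup>2)"
proof (rule Bochner_Integration.integrable_bound[OF Q_int[OF assms]])
  show "(\<lambda>k. (norm (Bfun \<phi> m y k) / norm k)\<^sup>2) \<in> borel_measurable lborel"
    using Bfun_meas[OF assms] by measurable
  show "AE k in lborel. norm ((norm (Bfun \<phi> m y k) / norm k)\<^sup>2) \<le> norm ((cmod (\<phi> (norm k)))\<^sup>2 * (norm k + 1 + 1 / norm k))"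
  proof (intro AE_I2)
    fix k :: "real^3"
    have "(norm (Bfun \<phi> m y k) / norm k)\<^sup>2 = (norm (Bfun \<phi> m y k))\<^sup>2 / (norm k)\<^sup>2"
      by (simp add: power_divide)
    also have "\<dots> \<le> (cmod (\<phi> (norm k)))\<^sup>2 * norm k / (2 * pi)^3 / (norm k)\<^sup>2"
      by (intro divide_right_mono Bfun_sq_le) auto
    also have "\<dots> \<le> (cmod (\<phi> (norm k)))\<^sup>2 * norm k / (norm k)\<^sup>2"
      using pi_cube_ge by (intro divide_right_mono div_le_self') auto
    also have "\<dots> = (cmod (\<phi> (norm k)))\<^sup>2 * (1 / norm k)"
      by (cases "k = 0") (simp_all add: power2_eq_square)
    also have "\<dots> \<le> (cmod (\<phi> (norm k)))\<^sup>2 * (norm k + 1 + 1 / norm k)"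
      by (intro mult_left_mono Q_ge) auto
    finally show "norm ((norm (Bfun \<phi> m y k) / norm k)\<^sup>2) \<le> norm ((cmod (\<phi> (norm k)))\<^sup>2 * (norm k + 1 + 1 / norm k))"
      by simp
  qed
qed

lemma int_Ajm:
  assumes "schwartz \<phi>"
  shows "integrable lborel (Ajm_integrand \<phi> j m y)"
proof (rule Bochner_Integration.integrable_bound[OF Q_int[OF assms]])
  show "Ajm_integrand \<phi> j m y \<in> borel_measurable lborel" using Ajm_integrand_meas[OF assms] .
  show "AE k in lborel. norm (Ajm_integrand \<phi> j m y k) \<le> norm ((cmod (\<phi> (norm k)))\<^sup>2 * (norm k + 1 + 1 / norm k))"
  proof (intro AE_I2)
    fix k :: "real^3"
    have "norm (Ajm_integrand \<phi> j m y k) \<le> (cmod (\<phi> (norm k)))\<^sup>2" by (rule Ajm_integrand_le)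
    also have "\<dots> = (cmod (\<phi> (norm k)))\<^sup>2 * 1" by simp
    also have "\<dots> \<le> (cmod (\<phi> (norm k)))\<^sup>2 * (norm k + 1 + 1 / norm k)"
      by (intro mult_left_mono Q_ge) auto
    finally show "norm (Ajm_integrand \<phi> j m y k) \<le> norm ((cmod (\<phi> (norm k)))\<^sup>2 * (norm k + 1 + 1 / norm k))"
      by simp
  qed
qed

lemma frak_B:
  assumes "schwartz \<phi>"
  shows "in_frak_h (Bfun \<phi> m y)"
  unfolding in_frak_h_def
proof (intro conjI Bfun_meas assms int_B_sq AE_I2)
  fix k :: "real^3"
  have "(\<Sum>i\<in>UNIV. complex_of_real (k $ i) * Bfun \<phi> m y k $ i)
      = beta \<phi> y k * complex_of_real ((\<Sum>i\<in>UNIV. k $ i * cross3 k (axis m 1) $ i) / norm k)"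
    unfolding Bfun_comp by (simp add: sum_distrib_left sum_divide_distrib algebra_simps)
  also have "(\<Sum>i\<in>UNIV. k $ i * cross3 k (axis m 1) $ i) = k \<bullet> cross3 k (axis m 1)"
    by (simp add: inner_vec_def)
  also have "\<dots> = 0" by (rule dot_cross_self)
  finally show "(\<Sum>i\<in>UNIV. complex_of_real (k $ i) * Bfun \<phi> m y k $ i) = 0" by simp
qed



lemma lborel_reflect3:
  fixes f :: "real^3 \<Rightarrow> complex"
  assumes [measurable]: "f \<in> borel_measurable borel"
  shows "integral\<^sup>L lborel (\<lambda>k. f (- k)) = integral\<^sup>L lborel f"
proof -
  have L: "(lborel :: (real^3) measure) = distr lborel borel uminus"
    using lborel_affine[of "-1::real" "0::real^3"] by (simp add: density_1 del: density_cong)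
  have "integral\<^sup>L lborel f = integral\<^sup>L (distr lborel borel uminus) f" using L by simp
  also have "\<dots> = integral\<^sup>L lborel (\<lambda>k. f (- k))" by (rule integral_distr) auto
  finally show ?thesis by simp
qed

lemma Ajm_sym: "Ajm \<phi> j m y = Ajm \<phi> m j y"
  unfolding Ajm_def Ajm_integrand_def by (simp add: mult.commute eq_commute)

lemma Ajm_neg:
  assumes "schwartz \<phi>"
  shows "Ajm \<phi> j m (- y) = Ajm \<phi> j m y"
proof -
  have [measurable]: "Ajm_integrand \<phi> j m (- y) \<in> borel_measurable borel"
    using Ajm_integrand_meas[OF assms] by simp
  have "integral\<^sup>L lborel (Ajm_integrand \<phi> j m y) = integral\<^sup>L lborel (\<lambda>k. Ajm_integrand \<phi> j m (- y) (- k))"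
    unfolding Ajm_integrand_def norm_minus_cancel by simp
  also have "\<dots> = integral\<^sup>L lborel (Ajm_integrand \<phi> j m (- y))"
    by (rule lborel_reflect3) measurable
  finally show ?thesis unfolding Ajm_def by simp
qed

lemma pauli_lin:
  "pauli n \<mu> (\<lambda>s'. \<Sum>l\<in>L. \<Sum>m\<in>K. a l m * Y l m s') s = (\<Sum>l\<in>L. \<Sum>m\<in>K. a l m * pauli n \<mu> (Y l m) s)"
  unfolding pauli_def by (auto simp: sum_distrib_left algebra_simps)



lemma sum3_swap:
  fixes b :: "'i \<Rightarrow> complex"
  shows "(\<Sum>i\<in>I. b i * (\<Sum>l\<in>L. \<Sum>m\<in>K. a l m i * P l m)) = (\<Sum>l\<in>L. \<Sum>m\<in>K. P l m * (\<Sum>i\<in>I. b i * a l m i))"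
proof -
  have "(\<Sum>i\<in>I. b i * (\<Sum>l\<in>L. \<Sum>m\<in>K. a l m i * P l m)) = (\<Sum>i\<in>I. \<Sum>l\<in>L. \<Sum>m\<in>K. P l m * (b i * a l m i))"
    by (simp add: sum_distrib_left mult_ac)
  also have "\<dots> = (\<Sum>l\<in>L. \<Sum>i\<in>I. \<Sum>m\<in>K. P l m * (b i * a l m i))" by (rule sum.swap)
  also have "\<dots> = (\<Sum>l\<in>L. \<Sum>m\<in>K. \<Sum>i\<in>I. P l m * (b i * a l m i))" by (intro sum.cong refl sum.swap)
  also have "\<dots> = (\<Sum>l\<in>L. \<Sum>m\<in>K. P l m * (\<Sum>i\<in>I. b i * a l m i))" by (simp add: sum_distrib_left)
  finally show ?thesis .
qed

lemma main_eq:
  fixes \<phi> :: "real \<Rightarrow> complex"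
    and x :: "'p::finite \<Rightarrow> real^3"
    and M :: "'p \<Rightarrow> real"
    and X :: "'p spin"
  assumes sch: "schwartz \<phi>"
  shows "A_op \<phi> x M X =
           (\<lambda>s. - (1/2) * (\<Sum>l\<in>UNIV. \<Sum>\<mu>\<in>UNIV. \<Sum>j\<in>UNIV. \<Sum>m\<in>UNIV.
                complex_of_real (M l * M \<mu>) * Ajm \<phi> j m (x \<mu> - x l) *
                pauli m \<mu> (pauli j l X) s))"
proof
  fix s
  define c where "c = 1 / complex_of_real (sqrt 2)"
  define \<Psi>2 where "\<Psi>2 = Hph_inv (Hint \<phi> x M (Emb X))"
  define P where "P = (\<lambda>\<mu> n l m. pauli n \<mu> (pauli m l X) s)"
  have snd2: "snd \<Psi>2 s' k $ i = (\<Sum>l\<in>UNIV. \<Sum>m\<in>UNIV. (complex_of_real (M l) * c * Bfun \<phi> m (x l) k $ i / complex_of_real (norm k)) * pauli m l X s')"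
    for s' k i
    unfolding \<Psi>2_def Hph_inv_def Hint_def Emb_def segal_tensor_def c_def
    by (simp add: sum_distrib_left sum_divide_distrib algebra_simps)
  have pa: "pauli n \<mu> (\<lambda>s'. snd \<Psi>2 s' k $ i) s = (\<Sum>l\<in>UNIV. \<Sum>m\<in>UNIV. (complex_of_real (M l) * c * Bfun \<phi> m (x l) k $ i / complex_of_real (norm k)) * P \<mu> n l m)"
    for n \<mu> k i
    unfolding snd2 P_def by (rule pauli_lin)
  have integrand: "(\<Sum>i\<in>UNIV. cnj (Bfun \<phi> n (x \<mu>) k $ i) * (\<chi> i. pauli n \<mu> (\<lambda>s'. snd \<Psi>2 s' k $ i) s) $ i)
     = (\<Sum>l\<in>UNIV. \<Sum>m\<in>UNIV. (complex_of_real (M l) * c * P \<mu> n l m * complex_of_real (1 / (2 * pi) ^ 3)) * Ajm_integrand \<phi> n m (x l - x \<mu>) k)"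
    for n \<mu> k
  proof -
    have "(\<Sum>i\<in>UNIV. cnj (Bfun \<phi> n (x \<mu>) k $ i) * (\<chi> i. pauli n \<mu> (\<lambda>s'. snd \<Psi>2 s' k $ i) s) $ i)
      = (\<Sum>i\<in>UNIV. cnj (Bfun \<phi> n (x \<mu>) k $ i) * (\<Sum>l\<in>UNIV. \<Sum>m\<in>UNIV. (complex_of_real (M l) * c * Bfun \<phi> m (x l) k $ i / complex_of_real (norm k)) * P \<mu> n l m))"
      unfolding vec_lambda_beta pa ..
    also have "\<dots> = (\<Sum>l\<in>UNIV. \<Sum>m\<in>UNIV. P \<mu> n l m * (\<Sum>i\<in>UNIV. cnj (Bfun \<phi> n (x \<mu>) k $ i) * (complex_of_real (M l) * c * Bfun \<phi> m (x l) k $ i / complex_of_real (norm k))))"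
      by (rule sum3_swap)
    also have "\<dots> = (\<Sum>l\<in>UNIV. \<Sum>m\<in>UNIV. P \<mu> n l m * (complex_of_real (M l) * c) * ((\<Sum>i\<in>UNIV. cnj (Bfun \<phi> n (x \<mu>) k $ i) * Bfun \<phi> m (x l) k $ i) / complex_of_real (norm k)))"
      by (intro sum.cong refl) (simp add: sum_distrib_left sum_divide_distrib mult_ac)
    also have "\<dots> = (\<Sum>l\<in>UNIV. \<Sum>m\<in>UNIV. (complex_of_real (M l) * c * P \<mu> n l m * complex_of_real (1 / (2 * pi) ^ 3)) * Ajm_integrand \<phi> n m (x l - x \<mu>) k)"
      unfolding key1 by (simp add: mult_ac)
    finally show ?thesis .
  qed
  have l2: "l2inner (Bfun \<phi> n (x \<mu>)) (\<lambda>k. \<chi> i. pauli n \<mu> (\<lambda>s'. snd \<Psi>2 s' k $ i) s)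
     = (\<Sum>l\<in>UNIV. \<Sum>m\<in>UNIV. (complex_of_real (M l) * c * P \<mu> n l m) * Ajm \<phi> n m (x l - x \<mu>))"
    for n \<mu>
  proof -
    have "l2inner (Bfun \<phi> n (x \<mu>)) (\<lambda>k. \<chi> i. pauli n \<mu> (\<lambda>s'. snd \<Psi>2 s' k $ i) s)
       = (\<integral>k. (\<Sum>l\<in>UNIV. \<Sum>m\<in>UNIV. (complex_of_real (M l) * c * P \<mu> n l m * complex_of_real (1 / (2 * pi) ^ 3)) * Ajm_integrand \<phi> n m (x l - x \<mu>) k) \<partial>lborel)"
      unfolding l2inner_def integrand ..
    also have "\<dots> = (\<Sum>l\<in>UNIV. \<Sum>m\<in>UNIV. (complex_of_real (M l) * c * P \<mu> n l m * complex_of_real (1 / (2 * pi) ^ 3)) * (\<integral>k. Ajm_integrand \<phi> n m (x l - x \<mu>) k \<partial>lborel))"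
      by (simp add: integral_sum int_Ajm[OF sch] integral_mult_right_zero)
    also have "\<dots> = (\<Sum>l\<in>UNIV. \<Sum>m\<in>UNIV. (complex_of_real (M l) * c * P \<mu> n l m) * Ajm \<phi> n m (x l - x \<mu>))"
      unfolding Ajm_def by (simp add: mult_ac)
    finally show ?thesis .
  qed
  have "A_op \<phi> x M X s = - (\<Sum>\<mu>\<in>UNIV. \<Sum>n\<in>UNIV. complex_of_real (M \<mu>) * (c *
      l2inner (Bfun \<phi> n (x \<mu>)) (\<lambda>k. \<chi> i. pauli n \<mu> (\<lambda>s'. snd \<Psi>2 s' k $ i) s)))"
    unfolding A_op_def Emb_adj_def \<Psi>2_def[symmetric] c_def
    by (simp add: Hint_def segal_tensor_def)
  also have "\<dots> = - (\<Sum>\<mu>\<in>UNIV. \<Sum>n\<in>UNIV. \<Sum>l\<in>UNIV. \<Sum>m\<in>UNIV. (c * c) * 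
      (complex_of_real (M l * M \<mu>) * Ajm \<phi> m n (x \<mu> - x l) * P \<mu> n l m))"
  proof -
    have "Ajm \<phi> n m (x l - x \<mu>) = Ajm \<phi> m n (x \<mu> - x l)" for n m l \<mu>
      using Ajm_neg[OF sch, of n m "x \<mu> - x l"] Ajm_sym[of \<phi> n m] by simp
    then show ?thesis unfolding l2 by (simp add: sum_distrib_left mult_ac)
  qed
  also have "c * c = 1/2" unfolding c_def
    by (simp add: field_simps flip: of_real_mult)
  also have "- (\<Sum>\<mu>\<in>UNIV. \<Sum>n\<in>UNIV. \<Sum>l\<in>UNIV. \<Sum>m\<in>UNIV. (1/2) * 
      (complex_of_real (M l * M \<mu>) * Ajm \<phi> m n (x \<mu> - x l) * P \<mu> n l m))
    = - (1/2) * (\<Sum>l\<in>UNIV. \<Sum>\<mu>\<in>UNIV. \<Sum>m\<in>UNIV. \<Sum>n\<in>UNIV. 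
      complex_of_real (M l * M \<mu>) * Ajm \<phi> m n (x \<mu> - x l) * P \<mu> n l m)"
  proof -
    have "(\<Sum>\<mu>\<in>UNIV. \<Sum>n\<in>UNIV. \<Sum>l\<in>UNIV. \<Sum>m\<in>UNIV. F \<mu> n l m)
        = (\<Sum>l\<in>UNIV. \<Sum>\<mu>\<in>UNIV. \<Sum>m\<in>UNIV. \<Sum>n\<in>UNIV. F \<mu> n l m)" for F :: "'p \<Rightarrow> 3 \<Rightarrow> 'p \<Rightarrow> 3 \<Rightarrow> complex"
    proof -
      have "(\<Sum>\<mu>\<in>UNIV. \<Sum>n\<in>UNIV. \<Sum>l\<in>UNIV. \<Sum>m\<in>UNIV. F \<mu> n l m)
          = (\<Sum>\<mu>\<in>UNIV. \<Sum>l\<in>UNIV. \<Sum>n\<in>UNIV. \<Sum>m\<in>UNIV. F \<mu> n l m)"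
        by (intro sum.cong refl sum.swap)
      also have "\<dots> = (\<Sum>l\<in>UNIV. \<Sum>\<mu>\<in>UNIV. \<Sum>n\<in>UNIV. \<Sum>m\<in>UNIV. F \<mu> n l m)"
        by (rule sum.swap)
      also have "\<dots> = (\<Sum>l\<in>UNIV. \<Sum>\<mu>\<in>UNIV. \<Sum>m\<in>UNIV. \<Sum>n\<in>UNIV. F \<mu> n l m)"
        by (intro sum.cong refl sum.swap)
      finally show ?thesis .
    qed
    then show ?thesis by (simp add: sum_distrib_left sum_negf)
  qed
  finally show "A_op \<phi> x M X s = - (1/2) * (\<Sum>l\<in>UNIV. \<Sum>\<mu>\<in>UNIV. \<Sum>j\<in>UNIV. \<Sum>m\<in>UNIV.
                complex_of_real (M l * M \<mu>) * Ajm \<phi> j m (x \<mu> - x l) *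
                pauli m \<mu> (pauli j l X) s)"
    unfolding P_def .
qed


theorem proposition3p1:
  fixes \<phi> :: "real \<Rightarrow> complex"
    and x :: "'p::finite \<Rightarrow> real^3"
    and M :: "'p \<Rightarrow> real"
    and X :: "'p spin"
  assumes "schwartz \<phi>"
  shows "(\<forall>l m. in_frak_h (Bfun \<phi> m (x l))) \<and>
         (\<forall>l m. integrable lborel (\<lambda>k. (norm (Bfun \<phi> m (x l) k) / norm k)\<^sup>2)) \<and>
         (\<forall>j m y. integrable lborel (Ajm_integrand \<phi> j m y)) \<and>
         A_op \<phi> x M X =
           (\<lambda>s. - (1/2) * (\<Sum>l\<in>UNIV. \<Sum>\<mu>\<in>UNIV. \<Sum>j\<in>UNIV. \<Sum>m\<in>UNIV.
                complex_of_real (M l * M \<mu>) * Ajm \<phi> j m (x \<mu> - x l) *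
                pauli m \<mu> (pauli j l X) s))"
  using frak_B[OF assms] int_B_div[OF assms] int_Ajm[OF assms] main_eq[OF assms] by blast

end
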